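(* Let $\mu$ be a critical offspring distribution, let $X_1,X_2,\dots$ be i.i.d. with $\mathbf P(X_1=k)=\mu_{k+1}$ for $k\ge-1$, and $S_m=X_1+\dots+X_m$ ($S_0=0$). For every $\varepsilon>0$ there exists $\delta>0$ such that for all sufficiently large $n$ with $\mathbf P(S_n=-1)>0$, \[ \mathbf P\Big(\max_{0\le m\le n}|S_m|\ge\varepsilon n\ \Big|\ S_n=-1\Big)\le e^{-\delta n}. \]
   Context: An offspring distribution is a probability measure $\mu=(\mu_k)_{k\ge0}$ on $\mathbb Z_+$; it is critical if $\sum_kk\mu_k=1$. *)

theory Defs
  imports "HOL-Probability.Probability"
begin

text \<open>Critical offspring distribution: a pmf on the naturals with mean 1.
  (If the mean were infinite, the Bochner expectation would be 0, not 1.)\<close>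
definition critical_offspring :: "nat pmf \<Rightarrow> bool" where
  "critical_offspring \<mu> \<longleftrightarrow> measure_pmf.expectation \<mu> real = 1"

definition step_pmf :: "nat pmf \<Rightarrow> int pmf" where
  "step_pmf \<mu> = map_pmf (\<lambda>k. int k - 1) \<mu>"

text \<open>Joint law of the i.i.d. steps X_1..X_n, indexed by i < n (X_{i+1} = omega i).\<close>
definition steps_pmf :: "nat pmf \<Rightarrow> nat \<Rightarrow> (nat \<Rightarrow> int) pmf" where
  "steps_pmf \<mu> n = Pi_pmf {..<n} 0 (\<lambda>_. step_pmf \<mu>)"

definition walk :: "(nat \<Rightarrow> int) \<Rightarrow> nat \<Rightarrow> int" where
  "walk \<omega> m = (\<Sum>i<m. \<omega> i)"

end

theory Submission
  imports Defs "HOL-Real_Asymp.Real_Asymp"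
begin


lemma abs_exp_sub1_le: "\<bar>exp a - 1\<bar> \<le> \<bar>a\<bar> * exp (max a 0)" for a :: real
proof (cases "a \<ge> 0")
  case True
  have "1 - a \<le> exp (-a)" using exp_ge_add_one_self[of "-a"] by simp
  hence "exp a * (1 - a) \<le> exp a * exp (-a)" by (intro mult_left_mono) auto
  hence "exp a - a * exp a \<le> 1" by (simp add: algebra_simps exp_minus_inverse)
  moreover have "exp a \<ge> 1" using True by simp
  ultimately show ?thesis using True by (simp add: max_def)
next
  case False
  have "1 + a \<le> exp a" using exp_ge_add_one_self[of a] by simp
  moreover have "exp a \<le> 1" using False by simp
  ultimately have "\<bar>exp a - 1\<bar> \<le> - a" by (simp only: abs_if split: if_split) linarith
  thus ?thesis using False by (simp add: max_def)
qed

lemma small_theta: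
  fixes p :: "'a pmf" and Z :: "'a \<Rightarrow> real"
  assumes int: "integrable (measure_pmf p) Z" and bnd: "\<And>x. x \<in> set_pmf p \<Longrightarrow> Z x \<le> B" and B: "B \<ge> 0"
    and EZ: "measure_pmf.expectation p Z \<le> 0" and c: "c > 0"
  shows "\<exists>\<theta>>0. integrable (measure_pmf p) (\<lambda>x. exp (\<theta> * Z x)) \<and>
          measure_pmf.expectation p (\<lambda>x. exp (\<theta> * Z x)) \<le> exp (\<theta> * c)"
proof -
  define t :: "nat \<Rightarrow> real" where "t i = 1 / (real i + 1)" for i
  have tpos: "t i > 0" and tle: "t i \<le> 1" for i by (auto simp: t_def field_simps)
  define s where "s i x = (exp (t i * Z x) - 1) / t i" for i x
  have tZ: "t i * Z x \<le> B" if x: "x \<in> set_pmf p" for i x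
  proof (cases "Z x \<ge> 0")
    case True thus ?thesis using bnd[OF x] tle[of i] tpos[of i]
      by (metis mult_left_le_one_le order.trans less_imp_le mult.commute)
  next
    case False thus ?thesis using tpos[of i] B by (simp add: mult_pos_neg less_imp_le order.trans[of _ 0])
  qed
  have intexp: "integrable (measure_pmf p) (\<lambda>x. exp (t i * Z x))" for i
  proof (rule measure_pmf.integrable_const_bound[where B="exp B"])
    show "AE x in measure_pmf p. norm (exp (t i * Z x)) \<le> exp B"
      using tZ by (intro AE_pmfI) auto
  qed simp
  have lim: "(\<lambda>i. integral\<^sup>L p (s i)) \<longlonglongrightarrow> integral\<^sup>L p Z"
  proof (rule integral_dominated_convergence[where w="\<lambda>x. \<bar>Z x\<bar> * exp B"])
    show "integrable (measure_pmf p) (\<lambda>x. \<bar>Z x\<bar> * exp B)" using int by auto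
    show "AE x in measure_pmf p. (\<lambda>i. s i x) \<longlonglongrightarrow> Z x"
    proof (intro AE_I2)
      fix x
      have "(\<lambda>i::nat. (exp (Z x/(real i+1)) - 1)*(real i+1)) \<longlonglongrightarrow> Z x" by real_asymp
      thus "(\<lambda>i. s i x) \<longlonglongrightarrow> Z x" by (simp add: s_def t_def)
    qed
    show "AE x in measure_pmf p. norm (s i x) \<le> \<bar>Z x\<bar> * exp B" for i
    proof (intro AE_pmfI)
      fix x assume x: "x \<in> set_pmf p"
      have "\<bar>exp (t i * Z x) - 1\<bar> \<le> \<bar>t i * Z x\<bar> * exp (max (t i * Z x) 0)" by (rule abs_exp_sub1_le)
      also have "max (t i * Z x) 0 \<le> B"
        using tZ[OF x, of i] B by simp
      hence "\<bar>t i * Z x\<bar> * exp (max (t i * Z x) 0) \<le> \<bar>t i * Z x\<bar> * exp B" by (intro mult_left_mono) auto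
      finally show "norm (s i x) \<le> \<bar>Z x\<bar> * exp B"
        using tpos[of i] by (simp add: s_def abs_mult divide_le_eq field_simps)
    qed
  qed auto
  have "\<forall>\<^sub>F i in sequentially. integral\<^sup>L p (s i) < c"
    using EZ c by (intro order_tendstoD(2)[OF lim]) auto
  then obtain i where i: "integral\<^sup>L p (s i) < c" by (auto simp: eventually_sequentially)
  have "integral\<^sup>L p (s i) = (integral\<^sup>L p (\<lambda>x. exp (t i * Z x)) - 1) / t i"
    unfolding s_def using intexp[of i] by (simp add: Bochner_Integration.integral_diff)
  with i tpos[of i] have "integral\<^sup>L p (\<lambda>x. exp (t i * Z x)) < 1 + t i * c"
    by (simp add: divide_less_eq algebra_simps)
  also have "\<dots> \<le> exp (t i * c)" using exp_ge_add_one_self[of "t i * c"] by simp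
  finally show ?thesis using tpos[of i] intexp[of i] by (intro exI[of _ "t i"]) auto
qed


lemma crit_integrable:
  assumes "critical_offspring \<mu>"
  shows "integrable (measure_pmf \<mu>) real"
  using assms not_integrable_integral_eq[of "measure_pmf \<mu>" real]
  unfolding critical_offspring_def by fastforce

lemma step_integrable:
  assumes "critical_offspring \<mu>"
  shows "integrable (measure_pmf (step_pmf \<mu>)) real_of_int"
  using crit_integrable[OF assms] unfolding step_pmf_def by (simp add: of_nat_diff)

lemma step_mean:
  assumes "critical_offspring \<mu>"
  shows "measure_pmf.expectation (step_pmf \<mu>) real_of_int = 0"
proof -
  have "measure_pmf.expectation (step_pmf \<mu>) real_of_int =
        measure_pmf.expectation \<mu> (\<lambda>k. real k - 1)"
    unfolding step_pmf_def by simp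
  also have "\<dots> = measure_pmf.expectation \<mu> real - 1"
    using crit_integrable[OF assms] by (simp add: Bochner_Integration.integral_diff)
  finally show ?thesis using assms unfolding critical_offspring_def by simp
qed

lemma steps_component:
  assumes "i < n"
  shows "map_pmf (\<lambda>\<omega>. \<omega> i) (steps_pmf \<mu> n) = step_pmf \<mu>"
  using assms unfolding steps_pmf_def by (subst Pi_pmf_component) auto

lemma steps_component_integral:
  fixes f :: "int \<Rightarrow> real"
  assumes "i < n" "integrable (measure_pmf (step_pmf \<mu>)) f"
  shows "integrable (measure_pmf (steps_pmf \<mu> n)) (\<lambda>\<omega>. f (\<omega> i))"
    and "measure_pmf.expectation (steps_pmf \<mu> n) (\<lambda>\<omega>. f (\<omega> i)) = measure_pmf.expectation (step_pmf \<mu>) f"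
proof -
  have e: "step_pmf \<mu> = map_pmf (\<lambda>\<omega>. \<omega> i) (steps_pmf \<mu> n)" using steps_component[OF assms(1)] by simp
  show "integrable (measure_pmf (steps_pmf \<mu> n)) (\<lambda>\<omega>. f (\<omega> i))"
    using assms(2) by (subst (asm) e) simp
  show "measure_pmf.expectation (steps_pmf \<mu> n) (\<lambda>\<omega>. f (\<omega> i)) = measure_pmf.expectation (step_pmf \<mu>) f"
    by (subst e) simp
qed

lemma exp_sum_steps:
  fixes g :: "int \<Rightarrow> real"
  assumes I: "I \<subseteq> {..<n}" and int: "integrable (measure_pmf (step_pmf \<mu>)) (\<lambda>x. exp (g x))"
  shows "integrable (measure_pmf (steps_pmf \<mu> n)) (\<lambda>\<omega>. exp (\<Sum>i\<in>I. g (\<omega> i)))"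
    and "measure_pmf.expectation (steps_pmf \<mu> n) (\<lambda>\<omega>. exp (\<Sum>i\<in>I. g (\<omega> i)))
          = measure_pmf.expectation (step_pmf \<mu>) (\<lambda>x. exp (g x)) ^ card I"
proof -
  define f where "f i = (if i \<in> I then (\<lambda>x. exp (g x)) else (\<lambda>_. 1::real))" for i
  have fin: "finite I" using I finite_subset by blast
  have eq: "(\<Prod>i\<in>{..<n}. f i (\<omega> i)) = exp (\<Sum>i\<in>I. g (\<omega> i))" for \<omega>
  proof -
    have "(\<Prod>i\<in>{..<n}. f i (\<omega> i)) = (\<Prod>i\<in>{..<n}. if i \<in> I then exp (g (\<omega> i)) else 1)"
      by (intro prod.cong) (auto simp: f_def)
    also have "\<dots> = (\<Prod>i\<in>{..<n} \<inter> I. exp (g (\<omega> i)))" by (simp add: prod.inter_restrict)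
    also have "{..<n} \<inter> I = I" using I by blast
    finally show ?thesis by (simp add: exp_sum fin)
  qed
  have intf: "integrable (measure_pmf (step_pmf \<mu>)) (f i)" for i using int by (simp add: f_def)
  have "integrable (measure_pmf (Pi_pmf {..<n} 0 (\<lambda>_. step_pmf \<mu>))) (\<lambda>h. \<Prod>i\<in>{..<n}. f i (h i))"
    by (rule integrable_prod_Pi_pmf) (use intf in auto)
  thus "integrable (measure_pmf (steps_pmf \<mu> n)) (\<lambda>\<omega>. exp (\<Sum>i\<in>I. g (\<omega> i)))"
    unfolding steps_pmf_def eq .
  have "measure_pmf.expectation (Pi_pmf {..<n} 0 (\<lambda>_. step_pmf \<mu>)) (\<lambda>h. \<Prod>i\<in>{..<n}. f i (h i))
      = (\<Prod>i\<in>{..<n}. measure_pmf.expectation (step_pmf \<mu>) (\<lambda>v. f i v))"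
    by (rule expectation_prod_Pi_pmf) (use intf in \<open>auto simp: f_def\<close>)
  also have "\<dots> = (\<Prod>i\<in>{..<n}. if i \<in> I then measure_pmf.expectation (step_pmf \<mu>) (\<lambda>x. exp (g x)) else 1)"
    by (intro prod.cong) (auto simp: f_def)
  also have "\<dots> = (\<Prod>i\<in>{..<n} \<inter> I. measure_pmf.expectation (step_pmf \<mu>) (\<lambda>x. exp (g x)))"
    by (simp only: prod.inter_restrict finite_lessThan)
  also have "{..<n} \<inter> I = I" using I by blast
  finally show "measure_pmf.expectation (steps_pmf \<mu> n) (\<lambda>\<omega>. exp (\<Sum>i\<in>I. g (\<omega> i)))
          = measure_pmf.expectation (step_pmf \<mu>) (\<lambda>x. exp (g x)) ^ card I"
    unfolding steps_pmf_def eq by simp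
qed

lemma chernoff_steps:
  fixes g :: "int \<Rightarrow> real"
  assumes I: "I \<subseteq> {..<n}" and int: "integrable (measure_pmf (step_pmf \<mu>)) (\<lambda>x. exp (g x))"
  shows "measure_pmf.prob (steps_pmf \<mu> n) {\<omega>. b \<le> (\<Sum>i\<in>I. g (\<omega> i))}
           \<le> measure_pmf.expectation (step_pmf \<mu>) (\<lambda>x. exp (g x)) ^ card I / exp b"
proof -
  have "measure_pmf.prob (steps_pmf \<mu> n) {\<omega>. b \<le> (\<Sum>i\<in>I. g (\<omega> i))}
      = measure_pmf.prob (steps_pmf \<mu> n) {\<omega> \<in> space (measure_pmf (steps_pmf \<mu> n)). exp b \<le> exp (\<Sum>i\<in>I. g (\<omega> i))}"
    by simp
  also have "\<dots> \<le> measure_pmf.expectation (steps_pmf \<mu> n) (\<lambda>\<omega>. exp (\<Sum>i\<in>I. g (\<omega> i))) / exp b"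
    by (rule integral_Markov_inequality_measure[where A=UNIV]) (use exp_sum_steps(1)[OF I int] in auto)
  also have "\<dots> = measure_pmf.expectation (step_pmf \<mu>) (\<lambda>x. exp (g x)) ^ card I / exp b"
    using exp_sum_steps(2)[OF I int] by simp
  finally show ?thesis .
qed



lemma walk_split:
  assumes "m \<le> n"
  shows "walk \<omega> n = walk \<omega> m + (\<Sum>i\<in>{m..<n}. \<omega> i)"
  unfolding walk_def lessThan_atLeast0 using assms by (simp add: sum.atLeastLessThan_concat)

lemma numerator:
  assumes crit: "critical_offspring \<mu>" and eps: "\<epsilon> > 0"
  shows "\<exists>a>0. \<forall>n. measure_pmf.prob (steps_pmf \<mu> n)
             {\<omega>. real_of_int (Max ((\<lambda>m. \<bar>walk \<omega> m\<bar>) ` {0..n})) \<ge> \<epsilon> * real n \<and> walk \<omega> n = -1}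
           \<le> 2 * (real n + 1) * exp (- a * real n)"
proof -
  have intZ: "integrable (measure_pmf (step_pmf \<mu>)) (\<lambda>x. - real_of_int x)"
    using step_integrable[OF crit] by simp
  have EZ: "measure_pmf.expectation (step_pmf \<mu>) (\<lambda>x. - real_of_int x) \<le> 0"
    using step_mean[OF crit] by simp
  have bndZ: "- real_of_int x \<le> 1" if "x \<in> set_pmf (step_pmf \<mu>)" for x
    using that unfolding step_pmf_def by auto
  obtain \<theta> where th: "\<theta> > 0" and intE: "integrable (measure_pmf (step_pmf \<mu>)) (\<lambda>x. exp (\<theta> * (- real_of_int x)))"
    and phi: "measure_pmf.expectation (step_pmf \<mu>) (\<lambda>x. exp (\<theta> * (- real_of_int x))) \<le> exp (\<theta> * (\<epsilon>/2))"
    using small_theta[OF intZ bndZ _ EZ, of "\<epsilon>/2"] eps by auto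
  define g where "g x = \<theta> * (- real_of_int x)" for x
  define \<phi> where "\<phi> = measure_pmf.expectation (step_pmf \<mu>) (\<lambda>x. exp (g x))"
  define a where "a = \<theta> * \<epsilon> / 2"
  have apos: "a > 0" using th eps by (simp add: a_def)
  have phi0: "\<phi> \<ge> 0" unfolding \<phi>_def by (intro Bochner_Integration.integral_nonneg) auto
  have phile: "\<phi> \<le> exp a" using phi by (simp add: \<phi>_def g_def a_def)
  have tail: "measure_pmf.prob (steps_pmf \<mu> n) {\<omega>. \<theta> * \<epsilon> * real n \<le> (\<Sum>i\<in>I. g (\<omega> i))} \<le> exp (- a * real n)"
    if I: "I \<subseteq> {..<n}" for I n
  proof -
    have cI: "card I \<le> n" using card_mono[OF _ I] by simp
    have "measure_pmf.prob (steps_pmf \<mu> n) {\<omega>. \<theta> * \<epsilon> * real n \<le> (\<Sum>i\<in>I. g (\<omega> i))}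
        \<le> \<phi> ^ card I / exp (\<theta> * \<epsilon> * real n)"
      unfolding \<phi>_def by (rule chernoff_steps[OF I]) (use intE in \<open>simp add: g_def\<close>)
    also have "\<phi> ^ card I \<le> exp a ^ card I" by (intro power_mono phi0 phile)
    also have "exp a ^ card I \<le> exp a ^ n" using apos cI by (intro power_increasing) auto
    also have "exp a ^ n / exp (\<theta> * \<epsilon> * real n) = exp (- a * real n)"
      by (simp add: exp_of_nat_mult[symmetric] exp_diff[symmetric] a_def field_simps)
    finally show ?thesis by (simp add: divide_right_mono)
  qed
  show ?thesis
  proof (intro exI[of _ a] conjI allI apos)
    fix n :: nat
    define E1 where "E1 m = {\<omega>. \<theta> * \<epsilon> * real n \<le> (\<Sum>i\<in>{..<m}. g (\<omega> i))}" for m :: nat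
    define E2 where "E2 m = {\<omega>. \<theta> * \<epsilon> * real n \<le> (\<Sum>i\<in>{m..<n}. g (\<omega> i))}" for m :: nat
    let ?A = "{\<omega>. real_of_int (Max ((\<lambda>m. \<bar>walk \<omega> m\<bar>) ` {0..n})) \<ge> \<epsilon> * real n \<and> walk \<omega> n = -1}"
    have sub: "?A \<subseteq> (\<Union>m\<in>{0..n}. (E1 m \<union> E2 m))"
    proof
      fix \<omega> assume "\<omega> \<in> ?A"
      hence M: "real_of_int (Max ((\<lambda>m. \<bar>walk \<omega> m\<bar>) ` {0..n})) \<ge> \<epsilon> * real n" and wn: "walk \<omega> n = -1"
        by auto
      have "Max ((\<lambda>m. \<bar>walk \<omega> m\<bar>) ` {0..n}) \<in> (\<lambda>m. \<bar>walk \<omega> m\<bar>) ` {0..n}"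
        by (intro Max_in) auto
      then obtain m where m: "m \<in> {0..n}" and mx: "Max ((\<lambda>m. \<bar>walk \<omega> m\<bar>) ` {0..n}) = \<bar>walk \<omega> m\<bar>"
        by (metis (no_types, lifting) imageE)
      have big: "\<bar>real_of_int (walk \<omega> m)\<bar> \<ge> \<epsilon> * real n" using M mx by simp
      show "\<omega> \<in> (\<Union>m\<in>{0..n}. (E1 m \<union> E2 m))"
      proof (cases "real_of_int (walk \<omega> m) \<le> - (\<epsilon> * real n)")
        case True
        have "(\<Sum>i\<in>{..<m}. g (\<omega> i)) = \<theta> * (- real_of_int (walk \<omega> m))"
          by (simp add: g_def walk_def sum_distrib_left sum_negf)
        also have "\<theta> * (- real_of_int (walk \<omega> m)) \<ge> \<theta> * (\<epsilon> * real n)"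
          using True th by (intro mult_left_mono) auto
        finally have "\<omega> \<in> E1 m" by (simp add: E1_def mult.assoc)
        thus ?thesis using m by blast
      next
        case False
        hence wm: "real_of_int (walk \<omega> m) \<ge> \<epsilon> * real n" using big by linarith
        have "walk \<omega> n = walk \<omega> m + (\<Sum>i\<in>{m..<n}. \<omega> i)" using m by (intro walk_split) auto
        hence "sum \<omega> {m..<n} = -1 - walk \<omega> m" using wn by simp
        hence "real_of_int (sum \<omega> {m..<n}) = -1 - real_of_int (walk \<omega> m)" by simp
        hence "(\<Sum>i\<in>{m..<n}. g (\<omega> i)) = \<theta> * (1 + real_of_int (walk \<omega> m))"
        proof -
          have "(\<Sum>i\<in>{m..<n}. g (\<omega> i)) = - (\<theta> * real_of_int (sum \<omega> {m..<n}))"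
            by (simp add: g_def sum_distrib_left[symmetric] sum_negf flip: of_int_sum)
          also have "\<dots> = \<theta> * (- real_of_int (sum \<omega> {m..<n}))" by simp
          also have "- real_of_int (sum \<omega> {m..<n}) = 1 + real_of_int (walk \<omega> m)"
            using \<open>real_of_int (sum \<omega> {m..<n}) = _\<close> by linarith
          finally show ?thesis .
        qed
        also have "\<theta> * (1 + real_of_int (walk \<omega> m)) \<ge> \<theta> * (\<epsilon> * real n)"
          using wm th by (intro mult_left_mono) auto
        finally have "\<omega> \<in> E2 m" by (simp add: E2_def mult.assoc)
        thus ?thesis using m by blast
      qed
    qed
    have "measure_pmf.prob (steps_pmf \<mu> n) ?A \<le> measure_pmf.prob (steps_pmf \<mu> n) (\<Union>m\<in>{0..n}. (E1 m \<union> E2 m))"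
      by (intro measure_pmf.finite_measure_mono sub) auto
    also have "\<dots> \<le> (\<Sum>m\<in>{0..n}. measure_pmf.prob (steps_pmf \<mu> n) ((E1 m \<union> E2 m)))"
      by (intro measure_UNION_le) auto
    also have "\<dots> \<le> (\<Sum>m\<in>{0..n}. 2 * exp (- a * real n))"
    proof (intro sum_mono)
      fix m :: nat assume m: "m \<in> {0..n}"
      have "measure_pmf.prob (steps_pmf \<mu> n) ((E1 m \<union> E2 m))
          \<le> measure_pmf.prob (steps_pmf \<mu> n) (E1 m) + measure_pmf.prob (steps_pmf \<mu> n) (E2 m)"
        by (rule measure_Un_le) auto
      also have "\<dots> \<le> exp (- a * real n) + exp (- a * real n)"
        unfolding E1_def E2_def using m by (intro add_mono tail) auto
      finally show "measure_pmf.prob (steps_pmf \<mu> n) ((E1 m \<union> E2 m)) \<le> 2 * exp (- a * real n)" by simp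
    qed
    also have "\<dots> = 2 * (real n + 1) * exp (- a * real n)" by simp
    finally show "measure_pmf.prob (steps_pmf \<mu> n) ?A \<le> 2 * (real n + 1) * exp (- a * real n)" .
  qed
qed



definition W :: "nat pmf \<Rightarrow> nat \<Rightarrow> int pmf" where
  "W \<mu> n = map_pmf (\<lambda>\<omega>. walk \<omega> n) (steps_pmf \<mu> n)"

lemma W_0: "W \<mu> 0 = return_pmf 0"
  by (simp add: W_def steps_pmf_def walk_def)

lemma steps_Suc: "steps_pmf \<mu> (Suc n) = map_pmf (\<lambda>(y,f). f(n:=y)) (pair_pmf (step_pmf \<mu>) (steps_pmf \<mu> n))"
proof -
  have "{..<Suc n} = insert n {..<n}" by auto
  thus ?thesis unfolding steps_pmf_def by (simp add: Pi_pmf_insert)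
qed

lemma walk_upd: "walk (f(n:=y)) (Suc n) = walk f n + y"
  by (simp add: walk_def)

lemma W_Suc: "W \<mu> (Suc n) = map_pmf (\<lambda>(s,x). s + x) (pair_pmf (W \<mu> n) (step_pmf \<mu>))"
proof -
  have "W \<mu> (Suc n) = map_pmf (\<lambda>(y,f). walk f n + y) (pair_pmf (step_pmf \<mu>) (steps_pmf \<mu> n))"
    unfolding W_def steps_Suc by (simp add: pmf.map_comp o_def case_prod_unfold walk_upd)
  also have "\<dots> = map_pmf (\<lambda>(y,s). s + y) (map_pmf (\<lambda>(a, b). (id a, walk b n)) (pair_pmf (step_pmf \<mu>) (steps_pmf \<mu> n)))"
    by (simp add: pmf.map_comp o_def case_prod_unfold)
  also have "\<dots> = map_pmf (\<lambda>(y,s). s + y) (pair_pmf (step_pmf \<mu>) (W \<mu> n))"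
    by (subst map_pair) (simp add: W_def)
  also have "\<dots> = map_pmf (\<lambda>(s,x). s + x) (pair_pmf (W \<mu> n) (step_pmf \<mu>))"
    by (subst pair_commute_pmf) (simp add: pmf.map_comp o_def case_prod_unfold)
  finally show ?thesis .
qed

lemma W_add: "W \<mu> (a + b) = map_pmf (\<lambda>(s,t). s + t) (pair_pmf (W \<mu> a) (W \<mu> b))"
proof (induction b)
  case 0
  then show ?case by (simp add: W_0 pair_return_pmf2 pmf.map_comp o_def)
next
  case (Suc b)
  have "W \<mu> (a + Suc b) = map_pmf (\<lambda>(s,x). s + x) (pair_pmf (W \<mu> (a + b)) (step_pmf \<mu>))"
    by (simp add: W_Suc)
  also have "\<dots> = map_pmf (\<lambda>(s,t). s + t) (pair_pmf (W \<mu> a) (W \<mu> (Suc b)))"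
    unfolding Suc W_Suc
    by (simp add: pair_pmf_def map_pmf_def bind_assoc_pmf bind_return_pmf add.assoc)
  finally show ?case .
qed

lemma pmf_W_add: "pmf (W \<mu> (a + b)) (x + y) \<ge> pmf (W \<mu> a) x * pmf (W \<mu> b) y"
proof -
  have "pmf (W \<mu> a) x * pmf (W \<mu> b) y = measure_pmf.prob (pair_pmf (W \<mu> a) (W \<mu> b)) {(x,y)}"
    by (simp add: measure_pmf_single pmf_pair)
  also have "\<dots> \<le> measure_pmf.prob (pair_pmf (W \<mu> a) (W \<mu> b)) ((\<lambda>(s,t). s + t) -` {x + y})"
    by (intro measure_pmf.finite_measure_mono) auto
  also have "\<dots> = pmf (W \<mu> (a + b)) (x + y)"
    by (simp add: W_add pmf_map)
  finally show ?thesis .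
qed

lemma pmf_W_mult:
  assumes "pmf (W \<mu> a) x \<ge> r" "r \<ge> 0"
  shows "pmf (W \<mu> (k * a)) (int k * x) \<ge> r ^ k"
proof (induction k)
  case 0
  then show ?case by (simp add: W_0)
next
  case (Suc k)
  have "r ^ Suc k = r * r ^ k" by simp
  also have "\<dots> \<le> pmf (W \<mu> a) x * pmf (W \<mu> (k * a)) (int k * x)"
    using assms Suc by (intro mult_mono) auto
  also have "\<dots> \<le> pmf (W \<mu> (a + k * a)) (x + int k * x)" by (rule pmf_W_add)
  finally show ?case by (simp add: algebra_simps)
qed

lemma W_1: "W \<mu> 1 = step_pmf \<mu>"
  using W_Suc[of \<mu> 0] by (simp add: W_0 pair_return_pmf1 pmf.map_comp o_def)

lemma prob_walk_eq: "measure_pmf.prob (steps_pmf \<mu> n) {\<omega>. walk \<omega> n = v} = pmf (W \<mu> n) v"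
  by (simp add: W_def pmf_map vimage_def)

lemma pmf_step: "pmf (step_pmf \<mu>) (int k - 1) = pmf \<mu> k"
  unfolding step_pmf_def by (rule pmf_map_inj') (auto simp: inj_def)



lemma block:
  assumes p0: "pmf \<mu> 0 \<ge> \<beta>" and q: "pmf \<mu> d \<ge> \<beta>" and d: "d \<ge> 2" and b0: "\<beta> \<ge> 0"
  shows "\<exists>L. real L \<le> real (d - 1) * \<bar>real_of_int j\<bar> \<and> pmf (W \<mu> L) (- j) \<ge> \<beta> ^ L"
proof -
  have W1: "pmf (W \<mu> 1) (-1) \<ge> \<beta>" by (subst W_1) (use pmf_step[of \<mu> 0] p0 in simp)
  have down: "pmf (W \<mu> k) (- int k) \<ge> \<beta> ^ k" for k
    using pmf_W_mult[OF W1 b0, of k] by simp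
  show ?thesis
  proof (cases "j \<ge> 0")
    case True
    show ?thesis
    proof (intro exI conjI)
      have d1: "1 \<le> real (d - 1)" using d by simp
      have "real (nat j) = 1 * \<bar>real_of_int j\<bar>" using True by simp
      also have "\<dots> \<le> real (d - 1) * \<bar>real_of_int j\<bar>" by (rule mult_right_mono[OF d1]) simp
      finally show "real (nat j) \<le> real (d - 1) * \<bar>real_of_int j\<bar>" .
      show "pmf (W \<mu> (nat j)) (- j) \<ge> \<beta> ^ nat j" using down[of "nat j"] True by simp
    qed
  next
    case False
    define u where "u = d - 1"
    define t where "t = nat (- j)"
    have u1: "u \<ge> 1" using d by (simp add: u_def)
    have Wu_up: "pmf (W \<mu> 1) (int u) \<ge> \<beta>" by (subst W_1) (use pmf_step[of \<mu> d] q d in \<open>simp add: u_def of_nat_diff\<close>)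
    have "\<beta> ^ u = \<beta> * \<beta> ^ (u - 1)" using u1 by (metis Suc_pred' less_le_trans zero_less_one power_Suc)
    also have "\<dots> \<le> pmf (W \<mu> 1) (int u) * pmf (W \<mu> (u - 1)) (- int (u - 1))"
      using Wu_up down[of "u-1"] b0 by (intro mult_mono) auto
    also have "\<dots> \<le> pmf (W \<mu> (1 + (u - 1))) (int u + - int (u - 1))" by (rule pmf_W_add)
    also have "1 + (u - 1) = u" using u1 by simp
    also have "int u + - int (u - 1) = 1" using u1 by simp
    finally have blk: "pmf (W \<mu> u) 1 \<ge> \<beta> ^ u" .
    have "pmf (W \<mu> (t * u)) (int t * 1) \<ge> (\<beta> ^ u) ^ t"
      by (rule pmf_W_mult[OF blk]) (use b0 in auto)
    moreover have "int t = - j" using False by (simp add: t_def)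
    ultimately have "pmf (W \<mu> (t * u)) (- j) \<ge> \<beta> ^ (t * u)" by (simp add: power_mult[symmetric] mult.commute[of t u])
    moreover have "real (t * u) \<le> real (d - 1) * \<bar>real_of_int j\<bar>" using False
      by (simp add: t_def u_def mult.commute)
    ultimately show ?thesis by blast
  qed
qed



lemma lower_tail:
  assumes crit: "critical_offspring \<mu>" and eps: "\<epsilon> > 0"
  shows "\<exists>a>0. \<forall>m. measure_pmf.prob (steps_pmf \<mu> m) {\<omega>. real_of_int (walk \<omega> m) < - (\<epsilon> * real m)} \<le> exp (- a * real m)"
proof -
  have intZ: "integrable (measure_pmf (step_pmf \<mu>)) (\<lambda>x. - real_of_int x)"
    using step_integrable[OF crit] by simp
  have EZ: "measure_pmf.expectation (step_pmf \<mu>) (\<lambda>x. - real_of_int x) \<le> 0"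
    using step_mean[OF crit] by simp
  have bndZ: "- real_of_int x \<le> 1" if "x \<in> set_pmf (step_pmf \<mu>)" for x
    using that unfolding step_pmf_def by auto
  obtain \<theta> where th: "\<theta> > 0" and intE: "integrable (measure_pmf (step_pmf \<mu>)) (\<lambda>x. exp (\<theta> * (- real_of_int x)))"
    and phi: "measure_pmf.expectation (step_pmf \<mu>) (\<lambda>x. exp (\<theta> * (- real_of_int x))) \<le> exp (\<theta> * (\<epsilon>/2))"
    using small_theta[OF intZ bndZ _ EZ, of "\<epsilon>/2"] eps by auto
  define g where "g x = \<theta> * (- real_of_int x)" for x
  define \<phi> where "\<phi> = measure_pmf.expectation (step_pmf \<mu>) (\<lambda>x. exp (g x))"
  define a where "a = \<theta> * \<epsilon> / 2"
  have apos: "a > 0" using th eps by (simp add: a_def)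
  have phi0: "\<phi> \<ge> 0" unfolding \<phi>_def by (intro Bochner_Integration.integral_nonneg) auto
  have phile: "\<phi> \<le> exp a" using phi by (simp add: \<phi>_def g_def a_def)
  show ?thesis
  proof (intro exI[of _ a] conjI allI apos)
    fix m :: nat
    have "measure_pmf.prob (steps_pmf \<mu> m) {\<omega>. real_of_int (walk \<omega> m) < - (\<epsilon> * real m)}
       \<le> measure_pmf.prob (steps_pmf \<mu> m) {\<omega>. \<theta> * \<epsilon> * real m \<le> (\<Sum>i\<in>{..<m}. g (\<omega> i))}"
    proof (intro measure_pmf.finite_measure_mono subsetI) 
      fix \<omega> assume "\<omega> \<in> {\<omega>. real_of_int (walk \<omega> m) < - (\<epsilon> * real m)}"
      hence w: "- real_of_int (walk \<omega> m) \<ge> \<epsilon> * real m" by simp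
      have "(\<Sum>i\<in>{..<m}. g (\<omega> i)) = \<theta> * (- real_of_int (walk \<omega> m))"
        by (simp add: g_def walk_def sum_distrib_left sum_negf)
      also have "\<dots> \<ge> \<theta> * (\<epsilon> * real m)" using w th by (intro mult_left_mono) auto
      finally show "\<omega> \<in> {\<omega>. \<theta> * \<epsilon> * real m \<le> (\<Sum>i\<in>{..<m}. g (\<omega> i))}" by (simp add: mult.assoc)
    qed auto
    also have "\<dots> \<le> \<phi> ^ card {..<m} / exp (\<theta> * \<epsilon> * real m)"
      unfolding \<phi>_def by (rule chernoff_steps) (use intE in \<open>simp_all add: g_def\<close>)
    also have "\<phi> ^ card {..<m} \<le> exp a ^ m" using phi0 phile by (simp add: power_mono)
    also have "exp a ^ m / exp (\<theta> * \<epsilon> * real m) = exp (- a * real m)"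
      by (simp add: exp_of_nat_mult[symmetric] exp_diff[symmetric] a_def field_simps)
    finally show "measure_pmf.prob (steps_pmf \<mu> m) {\<omega>. real_of_int (walk \<omega> m) < - (\<epsilon> * real m)} \<le> exp (- a * real m)"
      by (simp add: divide_right_mono)
  qed
qed

lemma truncation:
  assumes crit: "critical_offspring \<mu>" and c: "c > 0"
  shows "\<exists>K::nat. measure_pmf.expectation (step_pmf \<mu>) (\<lambda>x. max (real_of_int x - real K) 0) < c"
proof -
  have int: "integrable (measure_pmf (step_pmf \<mu>)) (\<lambda>x. \<bar>real_of_int x\<bar>)"
    using step_integrable[OF crit] by simp
  have lim: "(\<lambda>K. measure_pmf.expectation (step_pmf \<mu>) (\<lambda>x. max (real_of_int x - real K) 0))
      \<longlonglongrightarrow> measure_pmf.expectation (step_pmf \<mu>) (\<lambda>x. 0)"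
  proof (rule integral_dominated_convergence[where w="\<lambda>x. \<bar>real_of_int x\<bar>"])
    show "AE x in measure_pmf (step_pmf \<mu>). (\<lambda>K. max (real_of_int x - real K) 0) \<longlonglongrightarrow> 0"
    proof (intro AE_I2)
      fix x :: int
      have "\<forall>\<^sub>F K in sequentially. max (real_of_int x - real K) 0 = 0"
        using eventually_ge_at_top[of "nat x"] by eventually_elim auto
      thus "(\<lambda>K. max (real_of_int x - real K) 0) \<longlonglongrightarrow> 0" by (rule tendsto_eventually)
    qed
    show "AE x in measure_pmf (step_pmf \<mu>). norm (max (real_of_int x - real K) 0) \<le> \<bar>real_of_int x\<bar>" for K
      by (intro AE_I2) auto
  qed (use int in auto)
  hence "\<forall>\<^sub>F K in sequentially. measure_pmf.expectation (step_pmf \<mu>) (\<lambda>x. max (real_of_int x - real K) 0) < c"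
    using c by (intro order_tendstoD(2)) auto
  thus ?thesis by (auto simp: eventually_sequentially)
qed



lemma upper_Y:
  assumes crit: "critical_offspring \<mu>" and eps: "\<epsilon> > 0"
  shows "\<exists>a>0. \<forall>m. measure_pmf.prob (steps_pmf \<mu> m)
            {\<omega>. \<epsilon> * real m \<le> (\<Sum>i\<in>{..<m}. min (real_of_int (\<omega> i)) (real K))} \<le> exp (- a * real m)"
proof -
  define Y where "Y x = min (real_of_int x) (real K)" for x
  have intX: "integrable (measure_pmf (step_pmf \<mu>)) real_of_int" by (rule step_integrable[OF crit])
  have intY: "integrable (measure_pmf (step_pmf \<mu>)) Y"
    unfolding Y_def by (intro integrable_min intX) auto
  have EY: "measure_pmf.expectation (step_pmf \<mu>) Y \<le> 0"
  proof -
    have "measure_pmf.expectation (step_pmf \<mu>) Y \<le> measure_pmf.expectation (step_pmf \<mu>) real_of_int"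
      by (intro integral_mono intY intX) (simp add: Y_def)
    thus ?thesis using step_mean[OF crit] by simp
  qed
  obtain \<theta> where th: "\<theta> > 0" and intE: "integrable (measure_pmf (step_pmf \<mu>)) (\<lambda>x. exp (\<theta> * Y x))"
    and phi: "measure_pmf.expectation (step_pmf \<mu>) (\<lambda>x. exp (\<theta> * Y x)) \<le> exp (\<theta> * (\<epsilon>/2))"
    using small_theta[OF intY _ _ EY, of "real K" "\<epsilon>/2"] eps by (auto simp: Y_def)
  define g where "g x = \<theta> * Y x" for x
  define \<phi> where "\<phi> = measure_pmf.expectation (step_pmf \<mu>) (\<lambda>x. exp (g x))"
  define a where "a = \<theta> * \<epsilon> / 2"
  have apos: "a > 0" using th eps by (simp add: a_def)
  have phi0: "\<phi> \<ge> 0" unfolding \<phi>_def by (intro Bochner_Integration.integral_nonneg) auto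
  have phile: "\<phi> \<le> exp a" using phi by (simp add: \<phi>_def g_def a_def)
  show ?thesis
  proof (intro exI[of _ a] conjI allI apos)
    fix m :: nat
    have "measure_pmf.prob (steps_pmf \<mu> m) {\<omega>. \<epsilon> * real m \<le> (\<Sum>i\<in>{..<m}. min (real_of_int (\<omega> i)) (real K))}
       \<le> measure_pmf.prob (steps_pmf \<mu> m) {\<omega>. \<theta> * \<epsilon> * real m \<le> (\<Sum>i\<in>{..<m}. g (\<omega> i))}"
    proof (intro measure_pmf.finite_measure_mono subsetI) 
      fix \<omega> assume "\<omega> \<in> {\<omega>. \<epsilon> * real m \<le> (\<Sum>i\<in>{..<m}. min (real_of_int (\<omega> i)) (real K))}"
      hence w: "\<epsilon> * real m \<le> (\<Sum>i\<in>{..<m}. Y (\<omega> i))" by (simp add: Y_def)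
      have "(\<Sum>i\<in>{..<m}. g (\<omega> i)) = \<theta> * (\<Sum>i\<in>{..<m}. Y (\<omega> i))"
        by (simp add: g_def sum_distrib_left)
      also have "\<dots> \<ge> \<theta> * (\<epsilon> * real m)" using w th by (intro mult_left_mono) auto
      finally show "\<omega> \<in> {\<omega>. \<theta> * \<epsilon> * real m \<le> (\<Sum>i\<in>{..<m}. g (\<omega> i))}" by (simp add: mult.assoc)
    qed auto
    also have "\<dots> \<le> \<phi> ^ card {..<m} / exp (\<theta> * \<epsilon> * real m)"
      unfolding \<phi>_def by (rule chernoff_steps) (use intE in \<open>simp_all add: g_def\<close>)
    also have "\<phi> ^ card {..<m} \<le> exp a ^ m" using phi0 phile by (simp add: power_mono)
    also have "exp a ^ m / exp (\<theta> * \<epsilon> * real m) = exp (- a * real m)"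
      by (simp add: exp_of_nat_mult[symmetric] exp_diff[symmetric] a_def field_simps)
    finally show "measure_pmf.prob (steps_pmf \<mu> m) {\<omega>. \<epsilon> * real m \<le> (\<Sum>i\<in>{..<m}. min (real_of_int (\<omega> i)) (real K))} \<le> exp (- a * real m)"
      by (simp add: divide_right_mono)
  qed
qed

lemma upper_R:
  assumes crit: "critical_offspring \<mu>" and eps: "\<epsilon> > 0" and m: "m > 0"
  shows "measure_pmf.prob (steps_pmf \<mu> m) {\<omega>. \<epsilon> * real m \<le> (\<Sum>i\<in>{..<m}. max (real_of_int (\<omega> i) - real K) 0)}
     \<le> measure_pmf.expectation (step_pmf \<mu>) (\<lambda>x. max (real_of_int x - real K) 0) / \<epsilon>"
proof -
  define R where "R x = max (real_of_int x - real K) 0" for x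
  have intR: "integrable (measure_pmf (step_pmf \<mu>)) R"
    unfolding R_def by (intro integrable_max Bochner_Integration.integrable_diff step_integrable[OF crit]) auto
  have intS: "integrable (measure_pmf (steps_pmf \<mu> m)) (\<lambda>\<omega>. \<Sum>i\<in>{..<m}. R (\<omega> i))"
    by (intro Bochner_Integration.integrable_sum steps_component_integral(1) intR) auto
  have ES: "measure_pmf.expectation (steps_pmf \<mu> m) (\<lambda>\<omega>. \<Sum>i\<in>{..<m}. R (\<omega> i))
      = real m * measure_pmf.expectation (step_pmf \<mu>) R"
  proof -
    have "measure_pmf.expectation (steps_pmf \<mu> m) (\<lambda>\<omega>. \<Sum>i\<in>{..<m}. R (\<omega> i))
        = (\<Sum>i\<in>{..<m}. measure_pmf.expectation (steps_pmf \<mu> m) (\<lambda>\<omega>. R (\<omega> i)))"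
      by (intro Bochner_Integration.integral_sum steps_component_integral(1) intR) auto
    also have "\<dots> = (\<Sum>i\<in>{..<m}. measure_pmf.expectation (step_pmf \<mu>) R)"
      by (intro sum.cong refl steps_component_integral(2) intR) auto
    finally show ?thesis by simp
  qed
  have "measure_pmf.prob (steps_pmf \<mu> m) {\<omega>. \<epsilon> * real m \<le> (\<Sum>i\<in>{..<m}. R (\<omega> i))}
      = measure_pmf.prob (steps_pmf \<mu> m) {\<omega> \<in> space (measure_pmf (steps_pmf \<mu> m)). \<epsilon> * real m \<le> (\<Sum>i\<in>{..<m}. R (\<omega> i))}"
    by simp
  also have "\<dots> \<le> measure_pmf.expectation (steps_pmf \<mu> m) (\<lambda>\<omega>. \<Sum>i\<in>{..<m}. R (\<omega> i)) / (\<epsilon> * real m)"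
    by (rule integral_Markov_inequality_measure[where A=UNIV])
       (use intS eps m in \<open>auto intro!: AE_I2 sum_nonneg simp: R_def\<close>)
  also have "\<dots> = measure_pmf.expectation (step_pmf \<mu>) R / \<epsilon>" using ES m by simp
  finally show ?thesis unfolding R_def by (simp add: R_def[abs_def])
qed



lemma wlln:
  assumes crit: "critical_offspring \<mu>" and eps: "\<epsilon> > 0"
  shows "\<forall>\<^sub>F m in sequentially. measure_pmf.prob (steps_pmf \<mu> m) {\<omega>. \<bar>real_of_int (walk \<omega> m)\<bar> \<le> \<epsilon> * real m} \<ge> 1/2"
proof -
  obtain a1 where a1: "a1 > 0" and L: "\<And>m. measure_pmf.prob (steps_pmf \<mu> m) {\<omega>. real_of_int (walk \<omega> m) < - (\<epsilon> * real m)} \<le> exp (- a1 * real m)"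
    using lower_tail[OF crit eps] by blast
  obtain K :: nat where K: "measure_pmf.expectation (step_pmf \<mu>) (\<lambda>x. max (real_of_int x - real K) 0) < \<epsilon>/8"
    using truncation[OF crit, of "\<epsilon>/8"] eps by auto
  have eps2: "\<epsilon>/2 > 0" using eps by simp
  obtain a2 where a2: "a2 > 0" and U2: "\<And>m. measure_pmf.prob (steps_pmf \<mu> m)
            {\<omega>. \<epsilon>/2 * real m \<le> (\<Sum>i\<in>{..<m}. min (real_of_int (\<omega> i)) (real K))} \<le> exp (- a2 * real m)"
    using upper_Y[OF crit eps2, of K] by blast
  have ev1: "\<forall>\<^sub>F m in sequentially. exp (- a1 * real m) \<le> 1/8" using a1 by real_asymp
  have ev2: "\<forall>\<^sub>F m in sequentially. exp (- a2 * real m) \<le> 1/8" using a2 by real_asymp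
  show ?thesis using ev1 ev2 eventually_gt_at_top[of 0]
  proof eventually_elim
    case (elim m)
    define M where "M = measure_pmf (steps_pmf \<mu> m)"
    define Lset where "Lset = {\<omega>. real_of_int (walk \<omega> m) < - (\<epsilon> * real m)}"
    define U1 where "U1 = {\<omega>. \<epsilon>/2 * real m \<le> (\<Sum>i\<in>{..<m}. max (real_of_int (\<omega> i) - real K) 0)}"
    define U2 where "U2 = {\<omega>. \<epsilon>/2 * real m \<le> (\<Sum>i\<in>{..<m}. min (real_of_int (\<omega> i)) (real K))}"
    define G where "G = {\<omega>. \<bar>real_of_int (walk \<omega> m)\<bar> \<le> \<epsilon> * real m}"
    have sub: "UNIV - G \<subseteq> Lset \<union> U1 \<union> U2"
    proof
      fix \<omega> assume "\<omega> \<in> UNIV - G"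
      hence nG: "\<not> \<bar>real_of_int (walk \<omega> m)\<bar> \<le> \<epsilon> * real m" by (simp add: G_def)
      have split: "real_of_int (walk \<omega> m) = (\<Sum>i\<in>{..<m}. min (real_of_int (\<omega> i)) (real K))
                     + (\<Sum>i\<in>{..<m}. max (real_of_int (\<omega> i) - real K) 0)"
        unfolding walk_def of_int_sum sum.distrib[symmetric]
        by (intro sum.cong refl) (simp add: min_def max_def)
      show "\<omega> \<in> Lset \<union> U1 \<union> U2"
      proof (cases "real_of_int (walk \<omega> m) < - (\<epsilon> * real m)")
        case True thus ?thesis by (simp add: Lset_def)
      next
        case False
        hence "real_of_int (walk \<omega> m) > \<epsilon> * real m" using nG by linarith
        hence "\<epsilon>/2 * real m \<le> (\<Sum>i\<in>{..<m}. min (real_of_int (\<omega> i)) (real K)) \<or>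
               \<epsilon>/2 * real m \<le> (\<Sum>i\<in>{..<m}. max (real_of_int (\<omega> i) - real K) 0)"
          using split by linarith
        thus ?thesis by (auto simp: U1_def U2_def)
      qed
    qed
    have pU1: "measure M U1 \<le> 1/4"
    proof -
      have "measure M U1 \<le> measure_pmf.expectation (step_pmf \<mu>) (\<lambda>x. max (real_of_int x - real K) 0) / (\<epsilon>/2)"
        unfolding M_def U1_def by (rule upper_R[OF crit eps2]) (use elim in auto)
      also have "\<dots> \<le> (\<epsilon>/8) / (\<epsilon>/2)" using K eps by (intro divide_right_mono) auto
      also have "\<dots> = 1/4" using eps by simp
      finally show ?thesis .
    qed
    have "measure M (UNIV - G) \<le> measure M (Lset \<union> U1 \<union> U2)"
      unfolding M_def by (intro measure_pmf.finite_measure_mono sub) auto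
    also have "\<dots> \<le> measure M Lset + measure M U1 + measure M U2"
      by (intro order.trans[OF measure_Un_le] add_mono measure_Un_le order.refl) (auto simp: M_def)
    also have "\<dots> \<le> 1/8 + 1/4 + 1/8"
      using L[of m] U2[of m] pU1 elim by (intro add_mono) (auto simp: M_def Lset_def U2_def)
    finally have "measure M (UNIV - G) \<le> 1/2" by simp
    moreover have "measure M (UNIV - G) = 1 - measure M G"
      unfolding M_def using measure_pmf.prob_compl[of G "steps_pmf \<mu> m"] by simp
    ultimately show ?case by (simp add: M_def G_def)
  qed
qed



lemma good_m:
  assumes crit: "critical_offspring \<mu>" and p0: "pmf \<mu> 0 > 0" and d: "d \<ge> 2" and q: "pmf \<mu> d > 0"
    and eta: "\<eta> > 0"
  shows "\<exists>m\<ge>1. pmf (W \<mu> m) 0 \<ge> exp (- \<eta> * real m)"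
proof -
  define \<beta> where "\<beta> = min (pmf \<mu> 0) (pmf \<mu> d)"
  have b0: "\<beta> > 0" using p0 q by (simp add: \<beta>_def)
  have b1: "\<beta> \<le> 1" using pmf_le_1[of \<mu> 0] by (simp add: \<beta>_def)
  define u where "u = real (d - 1)"
  have u1: "u \<ge> 1" using d by (simp add: u_def)
  define \<kappa> where "\<kappa> = - ln \<beta>"
  have k0: "\<kappa> \<ge> 0" using b0 b1 by (simp add: \<kappa>_def)
  define \<epsilon> where "\<epsilon> = \<eta> / (2 * (u * \<kappa> + 1))"
  have ukp: "u * \<kappa> + 1 > 0" using u1 k0 by (simp add: add_nonneg_pos)
  have eps: "\<epsilon> > 0" using eta ukp by (simp add: \<epsilon>_def)
  have ueps: "u * \<kappa> * \<epsilon> \<le> \<eta> / 2"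
  proof -
    have "u * \<kappa> * \<epsilon> = \<eta> / 2 * (u * \<kappa> / (u * \<kappa> + 1))" using ukp by (simp add: \<epsilon>_def field_simps)
    also have "\<dots> \<le> \<eta> / 2 * 1" using ukp eta u1 k0 by (intro mult_left_mono) auto
    finally show ?thesis by simp
  qed
  have ev: "\<forall>\<^sub>F m in sequentially. 2 * (2 * \<epsilon> * real m + 1) \<le> exp (\<eta> * real m / 2)"
    using eps eta by real_asymp
  obtain m where m0: "m > 0" and G: "measure_pmf.prob (steps_pmf \<mu> m) {\<omega>. \<bar>real_of_int (walk \<omega> m)\<bar> \<le> \<epsilon> * real m} \<ge> 1/2"
    and big: "2 * (2 * \<epsilon> * real m + 1) \<le> exp (\<eta> * real m / 2)"
    using eventually_conj[OF wlln[OF crit eps] eventually_conj[OF ev eventually_gt_at_top[of 0]]]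
    unfolding eventually_sequentially by blast
  define J where "J = \<lfloor>\<epsilon> * real m\<rfloor>"
  have J0: "J \<ge> 0" using eps m0 by (simp add: J_def)
  define S where "S = {-J..J}"
  have Sfin: "finite S" and Sne: "S \<noteq> {}" using J0 by (auto simp: S_def)
  have cardS: "real (card S) = 2 * real_of_int J + 1" using J0 by (simp add: S_def)
  have "{\<omega>. \<bar>real_of_int (walk \<omega> m)\<bar> \<le> \<epsilon> * real m} = (\<lambda>\<omega>. walk \<omega> m) -` S"
  proof -
    have "\<bar>real_of_int z\<bar> \<le> \<epsilon> * real m \<longleftrightarrow> z \<in> S" for z :: int
    proof -
      have "\<bar>real_of_int z\<bar> \<le> \<epsilon> * real m \<longleftrightarrow> real_of_int z \<le> \<epsilon> * real m \<and> real_of_int (- z) \<le> \<epsilon> * real m"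
        by auto
      also have "\<dots> \<longleftrightarrow> z \<le> J \<and> - z \<le> J" unfolding J_def by (simp only: le_floor_iff)
      finally show ?thesis by (auto simp: S_def)
    qed
    thus ?thesis by auto
  qed
  hence "measure_pmf.prob (W \<mu> m) S \<ge> 1/2" using G by (simp add: W_def)
  hence sumS: "(\<Sum>j\<in>S. pmf (W \<mu> m) j) \<ge> 1/2" using Sfin by (simp add: measure_measure_pmf_finite)
  obtain j where jS: "j \<in> S" and pj: "pmf (W \<mu> m) j \<ge> 1 / (2 * real (card S))"
  proof (rule ccontr)
    assume "\<not> thesis"
    with that have lt: "\<And>j. j \<in> S \<Longrightarrow> pmf (W \<mu> m) j < 1 / (2 * real (card S))" by force
    have "(\<Sum>j\<in>S. pmf (W \<mu> m) j) < (\<Sum>j\<in>S. 1 / (2 * real (card S)))"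
      by (intro sum_strict_mono Sfin Sne lt)
    also have "\<dots> = 1/2" using Sfin Sne by simp
    finally show False using sumS by simp
  qed
  have jabs: "\<bar>real_of_int j\<bar> \<le> \<epsilon> * real m"
  proof -
    have "\<bar>j\<bar> \<le> J" using jS by (auto simp: S_def)
    hence "\<bar>real_of_int j\<bar> \<le> real_of_int J" by linarith
    also have "\<dots> \<le> \<epsilon> * real m" unfolding J_def by simp
    finally show ?thesis .
  qed
  have pj': "pmf (W \<mu> m) j \<ge> exp (- (\<eta> * real m / 2))"
  proof -
    have "2 * real (card S) \<le> 2 * (2 * \<epsilon> * real m + 1)"
      using cardS J0 unfolding J_def by simp
    also have "\<dots> \<le> exp (\<eta> * real m / 2)" by (rule big)
    finally have "1 / exp (\<eta> * real m / 2) \<le> 1 / (2 * real (card S))"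
      using Sne Sfin by (intro divide_left_mono) (auto simp: card_gt_0_iff)
    hence "1 / exp (\<eta> * real m / 2) \<le> pmf (W \<mu> m) j" using pj by linarith
    thus ?thesis by (simp add: exp_minus inverse_eq_divide)
  qed
  obtain L where L: "real L \<le> u * \<bar>real_of_int j\<bar>" and pL: "pmf (W \<mu> L) (- j) \<ge> \<beta> ^ L"
    using block[of \<beta> \<mu> d j] d b0 by (auto simp: \<beta>_def u_def)
  have bL: "\<beta> ^ L \<ge> exp (- (\<eta> * real m / 2))"
  proof -
    have "\<beta> ^ L = exp (ln \<beta>) ^ L" using b0 by simp
    also have "\<dots> = exp (real L * ln \<beta>)" by (rule exp_of_nat_mult[symmetric])
    finally have e: "\<beta> ^ L = exp (- (\<kappa> * real L))" by (simp add: \<kappa>_def mult.commute)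
    have "\<kappa> * real L \<le> \<kappa> * (u * (\<epsilon> * real m))"
      using L jabs k0 u1 by (intro mult_left_mono order.trans[OF L] mult_left_mono) auto
    also have "\<kappa> * (u * (\<epsilon> * real m)) = (u * \<kappa> * \<epsilon>) * real m" by simp
    also have "\<dots> \<le> \<eta> / 2 * real m" by (intro mult_right_mono ueps) auto
    finally have "\<kappa> * real L \<le> \<eta> * real m / 2" by simp
    thus ?thesis unfolding e by simp
  qed
  have "pmf (W \<mu> (m + L)) (j + - j) \<ge> pmf (W \<mu> m) j * pmf (W \<mu> L) (- j)" by (rule pmf_W_add)
  moreover have "pmf (W \<mu> m) j * pmf (W \<mu> L) (- j) \<ge> exp (- (\<eta> * real m / 2)) * exp (- (\<eta> * real m / 2))"
    using pj' pL bL by (intro mult_mono) auto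
  moreover have "exp (- (\<eta> * real m / 2)) * exp (- (\<eta> * real m / 2)) = exp (- \<eta> * real m)"
    by (simp add: exp_add[symmetric])
  moreover have "exp (- \<eta> * real m) \<ge> exp (- \<eta> * real (m + L))" using eta by simp
  ultimately have "pmf (W \<mu> (m + L)) 0 \<ge> exp (- \<eta> * real (m + L))"
    by (smt (verit) add.right_inverse)
  thus ?thesis using m0 by (intro exI[of _ "m + L"]) auto
qed



lemma denominator:
  assumes crit: "critical_offspring \<mu>" and p0: "pmf \<mu> 0 > 0" and d: "d \<ge> 2" and q: "pmf \<mu> d > 0"
    and eta: "\<eta> > 0"
  shows "\<exists>N. \<forall>n\<ge>N. pmf (W \<mu> n) (-1) > 0 \<longrightarrow> pmf (W \<mu> n) (-1) \<ge> exp (- \<eta> * real n)"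
proof -
  have eta2: "\<eta>/2 > 0" using eta by simp
  obtain m where m1: "m \<ge> 1" and cm: "pmf (W \<mu> m) 0 \<ge> exp (- (\<eta>/2) * real m)"
    using good_m[OF crit p0 d q eta2] by blast
  define T where "T r \<longleftrightarrow> pmf (W \<mu> r) (-1) > 0" for r
  define Js where "Js = {j. j < m \<and> (\<exists>r. T r \<and> r mod m = j)}"
  define rep where "rep j = (LEAST r. T r \<and> r mod m = j)" for j
  define C where "C = (if Js = {} then 1 else Min ((\<lambda>j. pmf (W \<mu> (rep j)) (-1)) ` Js))"
  have Jsfin: "finite Js" by (simp add: Js_def)
  have rep: "T (rep j) \<and> rep j mod m = j" if jJ: "j \<in> Js" for j
  proof -
    obtain r0 where "T r0 \<and> r0 mod m = j" using jJ by (auto simp: Js_def)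
    thus ?thesis unfolding rep_def by (rule LeastI)
  qed
  have Cpos: "C > 0"
    using Jsfin rep by (auto simp: C_def T_def)
  have Cle: "C \<le> pmf (W \<mu> (rep j)) (-1)" if "j \<in> Js" for j
    using that Jsfin by (auto simp: C_def)
  have "((\<lambda>n. exp (- (\<eta>/2) * real n)) \<longlongrightarrow> 0) sequentially" using eta by real_asymp
  hence "\<forall>\<^sub>F n in sequentially. exp (- (\<eta>/2) * real n) < C" using Cpos by (intro order_tendstoD(2)) auto
  then obtain N where N: "\<And>n. n \<ge> N \<Longrightarrow> exp (- (\<eta>/2) * real n) < C" by (auto simp: eventually_sequentially)
  show ?thesis
  proof (intro exI[of _ N] allI impI)
    fix n assume nN: "n \<ge> N" and Tn: "pmf (W \<mu> n) (-1) > 0"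
    define j where "j = n mod m"
    have jJs: "j \<in> Js" using Tn m1 by (auto simp: Js_def j_def T_def)
    define r where "r = rep j"
    have Tr: "T r" and rj: "r mod m = j" using rep[OF jJs] by (auto simp: r_def)
    have rn: "r \<le> n" unfolding r_def rep_def using Tn by (intro Least_le) (auto simp: T_def j_def)
    have "m dvd n - r" using rj rn by (simp add: mod_eq_dvd_iff_nat[symmetric] j_def)
    then obtain k where k: "n - r = m * k" by (auto elim: dvdE)
    have nk: "n = k * m + r" using k rn by (simp add: algebra_simps)
    have km: "real k * real m \<le> real n" using nk by simp
    have "pmf (W \<mu> (k * m)) (int k * 0) \<ge> exp (- (\<eta>/2) * real m) ^ k"
      by (rule pmf_W_mult[OF cm]) auto
    moreover have "exp (- (\<eta>/2) * real m) ^ k = exp (- (\<eta>/2) * (real k * real m))"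
      by (simp add: exp_of_nat_mult[symmetric] algebra_simps)
    moreover have "exp (- (\<eta>/2) * (real k * real m)) \<ge> exp (- (\<eta>/2) * real n)"
      using km eta by simp
    ultimately have A: "pmf (W \<mu> (k * m)) 0 \<ge> exp (- (\<eta>/2) * real n)"
      by (metis (no_types, lifting) mult_zero_right order.trans)
    have B: "pmf (W \<mu> r) (-1) \<ge> exp (- (\<eta>/2) * real n)"
      using N[OF nN] Cle[OF jJs] by (simp add: r_def)
    have "exp (- \<eta> * real n) = exp (- (\<eta>/2) * real n) * exp (- (\<eta>/2) * real n)"
      by (simp add: exp_add[symmetric])
    also have "\<dots> \<le> pmf (W \<mu> (k * m)) 0 * pmf (W \<mu> r) (-1)"
      using A B by (intro mult_mono) auto
    also have "\<dots> \<le> pmf (W \<mu> (k * m + r)) (0 + -1)" by (rule pmf_W_add)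
    finally show "pmf (W \<mu> n) (-1) \<ge> exp (- \<eta> * real n)" using nk by simp
  qed
qed



lemma no_zero_offspring:
  assumes "pmf \<mu> 0 = 0"
  shows "measure_pmf.prob (steps_pmf \<mu> n) {\<omega>. walk \<omega> n = -1} = 0"
proof -
  have "walk \<omega> n \<ge> 0" if "\<omega> \<in> set_pmf (steps_pmf \<mu> n)" for \<omega>
  proof -
    have "\<omega> i \<ge> 0" if i: "i < n" for i
    proof -
      have "\<omega> \<in> PiE_dflt {..<n} 0 (set_pmf \<circ> (\<lambda>_. step_pmf \<mu>))"
        using set_Pi_pmf_subset'[of "{..<n}" 0 "\<lambda>_. step_pmf \<mu>"] \<open>\<omega> \<in> set_pmf (steps_pmf \<mu> n)\<close>
        by (auto simp: steps_pmf_def)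
      hence "\<omega> i \<in> set_pmf (step_pmf \<mu>)" using i by (auto simp: PiE_dflt_def)
      then obtain k where k: "k \<in> set_pmf \<mu>" and ok: "\<omega> i = int k - 1" by (auto simp: step_pmf_def)
      have "k \<noteq> 0" using k assms by (metis set_pmf_iff)
      thus ?thesis using ok by simp
    qed
    thus ?thesis unfolding walk_def by (intro sum_nonneg) auto
  qed
  hence "set_pmf (steps_pmf \<mu> n) \<inter> {\<omega>. walk \<omega> n = -1} = {}" by fastforce
  thus ?thesis by (simp add: measure_pmf_zero_iff)
qed

lemma exists_big:
  assumes crit: "critical_offspring \<mu>" and p0: "pmf \<mu> 0 > 0"
  shows "\<exists>d\<ge>2. pmf \<mu> d > 0"
proof (rule ccontr)
  assume "\<not> ?thesis"
  hence z: "\<And>d. d \<ge> 2 \<Longrightarrow> pmf \<mu> d = 0" using pmf_nonneg[of \<mu>] by (metis less_eq_real_def)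
  have "measure_pmf.expectation \<mu> real = (\<Sum>a\<in>{1::nat}. real a * pmf \<mu> a)"
  proof (rule integral_measure_pmf_real)
    fix a assume "a \<in> set_pmf \<mu>" "real a \<noteq> 0"
    thus "a \<in> {1}" using z[of a] by (cases "a \<ge> 2") (auto simp: set_pmf_eq)
  qed auto
  hence e1: "pmf \<mu> 1 = 1" using crit by (simp add: critical_offspring_def)
  have "pmf \<mu> 0 + pmf \<mu> 1 = measure_pmf.prob \<mu> {0, 1}"
    by (simp add: measure_measure_pmf_finite)
  also have "\<dots> \<le> 1" by simp
  finally show False using e1 p0 by simp
qed

theorem mainTheorem14:
  fixes \<mu> :: "nat pmf" and \<epsilon> :: real
  assumes "critical_offspring \<mu>" and "\<epsilon> > 0"
  shows "\<exists>\<delta>>0. \<exists>N. \<forall>n\<ge>N.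
           measure_pmf.prob (steps_pmf \<mu> n) {\<omega>. walk \<omega> n = -1} > 0 \<longrightarrow>
           measure_pmf.prob (steps_pmf \<mu> n)
             {\<omega>. real_of_int (Max ((\<lambda>m. \<bar>walk \<omega> m\<bar>) ` {0..n})) \<ge> \<epsilon> * real n \<and> walk \<omega> n = -1}
           / measure_pmf.prob (steps_pmf \<mu> n) {\<omega>. walk \<omega> n = -1}
           \<le> exp (- \<delta> * real n)"
proof (cases "pmf \<mu> 0 = 0")
  case True
  show ?thesis using no_zero_offspring[OF True] by (intro exI[of _ 1]) auto
next
  case False
  hence p0: "pmf \<mu> 0 > 0" using pmf_nonneg[of \<mu> 0] by linarith
  obtain d where d: "d \<ge> 2" and q: "pmf \<mu> d > 0" using exists_big[OF assms(1) p0] by blast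
  obtain a where a: "a > 0" and num: "\<And>n. measure_pmf.prob (steps_pmf \<mu> n)
             {\<omega>. real_of_int (Max ((\<lambda>m. \<bar>walk \<omega> m\<bar>) ` {0..n})) \<ge> \<epsilon> * real n \<and> walk \<omega> n = -1}
           \<le> 2 * (real n + 1) * exp (- a * real n)"
    using numerator[OF assms] by blast
  have a2: "a/2 > 0" using a by simp
  obtain N1 where N1: "\<And>n. n \<ge> N1 \<Longrightarrow> pmf (W \<mu> n) (-1) > 0 \<Longrightarrow> pmf (W \<mu> n) (-1) \<ge> exp (- (a/2) * real n)"
    using denominator[OF assms(1) p0 d q a2] by blast
  have "\<forall>\<^sub>F n in sequentially. 2 * (real n + 1) * exp (- a * real n) / exp (- (a/2) * real n) \<le> exp (- (a/4) * real n)"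
    using a by real_asymp
  then obtain N2 where N2: "\<And>n. n \<ge> N2 \<Longrightarrow> 2 * (real n + 1) * exp (- a * real n) / exp (- (a/2) * real n) \<le> exp (- (a/4) * real n)"
    by (auto simp: eventually_sequentially)
  show ?thesis
  proof (intro exI[of _ "a/4"] exI[of _ "max N1 N2"] conjI allI impI)
    show "a/4 > 0" using a by simp
    fix n assume n: "n \<ge> max N1 N2"
    assume pos: "measure_pmf.prob (steps_pmf \<mu> n) {\<omega>. walk \<omega> n = -1} > 0"
    hence pos': "pmf (W \<mu> n) (-1) > 0" by (simp add: prob_walk_eq)
    have den: "measure_pmf.prob (steps_pmf \<mu> n) {\<omega>. walk \<omega> n = -1} \<ge> exp (- (a/2) * real n)"
      using N1[of n] n pos' by (simp add: prob_walk_eq)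
    have "measure_pmf.prob (steps_pmf \<mu> n)
             {\<omega>. real_of_int (Max ((\<lambda>m. \<bar>walk \<omega> m\<bar>) ` {0..n})) \<ge> \<epsilon> * real n \<and> walk \<omega> n = -1}
           / measure_pmf.prob (steps_pmf \<mu> n) {\<omega>. walk \<omega> n = -1}
          \<le> 2 * (real n + 1) * exp (- a * real n) / exp (- (a/2) * real n)"
      by (intro frac_le num den) auto
    also have "\<dots> \<le> exp (- (a/4) * real n)" using N2[of n] n by simp
    finally show "measure_pmf.prob (steps_pmf \<mu> n)
             {\<omega>. real_of_int (Max ((\<lambda>m. \<bar>walk \<omega> m\<bar>) ` {0..n})) \<ge> \<epsilon> * real n \<and> walk \<omega> n = -1}
           / measure_pmf.prob (steps_pmf \<mu> n) {\<omega>. walk \<omega> n = -1}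
          \<le> exp (- (a/4) * real n)" .
  qed
qed


end
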